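(* Let $\alpha \in \mathbb{R}_{>0}$ with $\alpha \neq 1$, and let $M_\alpha = \{f(\alpha) \mid f(x) \in \mathbb{N}_0[x,x^{-1}]\}$ as an additive monoid. Then $M_\alpha$ is not atomic if and only if the additive monoid $(\mathbb{N}_0[\alpha],+) = \{f(\alpha) \mid f(x) \in \mathbb{N}_0[x]\}$ is antimatter or finitely generated.
   Context: $\mathbb{N}_0[x,x^{-1}]$ denotes the semiring of Laurent polynomials with coefficients in $\mathbb{N}_0$. For a reduced additive monoid, an atom is a nonzero element not expressible as a sum of two nonzero elements; the monoid is atomic if every nonzero element is a sum of atoms, and antimatter if it has no atoms. *)

theory Defs
  imports Complex_Main "HOL-Computational_Algebra.Polynomial"
begin

text \<open>Additive submonoids of an ambient commutative monoid are given by their carrier set.\<close>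

definition atom :: "'a::comm_monoid_add set \<Rightarrow> 'a \<Rightarrow> bool" where
  "atom M a \<longleftrightarrow> a \<in> M \<and> a \<noteq> 0 \<and>
     \<not> (\<exists>b c. b \<in> M \<and> c \<in> M \<and> b \<noteq> 0 \<and> c \<noteq> 0 \<and> a = b + c)"

definition atomic_monoid :: "'a::comm_monoid_add set \<Rightarrow> bool" where
  "atomic_monoid M \<longleftrightarrow>
     (\<forall>x\<in>M. x \<noteq> 0 \<longrightarrow> (\<exists>xs. (\<forall>a\<in>set xs. atom M a) \<and> sum_list xs = x))"

definition antimatter :: "'a::comm_monoid_add set \<Rightarrow> bool" where
  "antimatter M \<longleftrightarrow> \<not> (\<exists>a. atom M a)"

definition fin_generated :: "real set \<Rightarrow> bool" where
  "fin_generated M \<longleftrightarrow>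
     (\<exists>G. finite G \<and> G \<subseteq> M \<and> M = {\<Sum>g\<in>G. real (n g) * g | n :: real \<Rightarrow> nat. True})"

definition laurent_eval_monoid :: "real \<Rightarrow> real set" where
  "laurent_eval_monoid \<alpha> =
     {\<Sum>i\<in>S. real (c i) * \<alpha> powi i | (S :: int set) (c :: int \<Rightarrow> nat). finite S}"

definition poly_eval_monoid :: "real \<Rightarrow> real set" where
  "poly_eval_monoid \<alpha> = {poly (map_poly real p) \<alpha> | p :: nat poly. True}"

end

theory Submission
  imports Defs
begin

definition LS :: "real \<Rightarrow> real set" where
  "LS \<alpha> = {sum_list (map (\<lambda>k. \<alpha> powi k) ks) | ks. True}"
definition PS :: "real \<Rightarrow> real set" where
  "PS \<alpha> = {sum_list (map (\<lambda>k. \<alpha> ^ k) ks) | ks :: nat list. True}"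

lemma sum_list_count_real:
  fixes f :: "'a \<Rightarrow> real"
  shows "sum_list (map f xs) = (\<Sum>x\<in>set xs. real (count_list xs x) * f x)"
proof(induction xs)
  case (Cons x xs)
  show ?case (is "?l = ?r")
  proof cases
    assume "x \<in> set xs"
    have "?l = f x + (\<Sum>x\<in>set xs. real (count_list xs x) * f x)" by (simp add: Cons.IH)
    also have "set xs = insert x (set xs - {x})" using \<open>x \<in> set xs\<close> by blast
    also have "f x + (\<Sum>x\<in>insert x (set xs - {x}). real (count_list xs x) * f x) = ?r"
      by (simp add: sum.insert_remove eq_commute algebra_simps)
    finally show ?thesis .
  next
    assume "x \<notin> set xs"
    hence "\<And>xa. xa \<in> set xs \<Longrightarrow> x \<noteq> xa" by blast
    thus ?thesis by (simp add: Cons.IH \<open>x \<notin> set xs\<close>)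
  qed
qed simp

lemma sum_list_count_real2:
  fixes f :: "'a \<Rightarrow> real"
  assumes "set xs \<subseteq> X" "finite X"
  shows "sum_list (map f xs) = (\<Sum>x\<in>X. real (count_list xs x) * f x)"
  unfolding sum_list_count_real
  by (rule sum.mono_neutral_left) (use assms in \<open>auto simp: count_list_0_iff\<close>)

lemma L_eq: "laurent_eval_monoid \<alpha> = LS \<alpha>"
proof
  show "laurent_eval_monoid \<alpha> \<subseteq> LS \<alpha>"
  proof
    fix x assume "x \<in> laurent_eval_monoid \<alpha>"
    then obtain S c where S: "finite S" and x: "x = (\<Sum>i\<in>S. real (c i) * \<alpha> powi i)"
      unfolding laurent_eval_monoid_def by blast
    have "\<exists>ks. (\<Sum>i\<in>S. real (c i) * \<alpha> powi i) = sum_list (map (\<lambda>k. \<alpha> powi k) ks)"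
      using S
    proof (induction S rule: finite_induct)
      case empty then show ?case by (intro exI[of _ "[]"]) simp
    next
      case (insert a S)
      then obtain ks where "(\<Sum>i\<in>S. real (c i) * \<alpha> powi i) = sum_list (map (\<lambda>k. \<alpha> powi k) ks)" by blast
      then show ?case using insert by (intro exI[of _ "replicate (c a) a @ ks"]) (simp add: sum_list_replicate)
    qed
    then show "x \<in> LS \<alpha>" using x unfolding LS_def by auto
  qed
  show "LS \<alpha> \<subseteq> laurent_eval_monoid \<alpha>"
  proof
    fix x assume "x \<in> LS \<alpha>"
    then obtain ks where x: "x = sum_list (map (\<lambda>k. \<alpha> powi k) ks)" unfolding LS_def by blast
    have "x = (\<Sum>i\<in>set ks. real (count_list ks i) * \<alpha> powi i)"
      unfolding x by (rule sum_list_count_real)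
    then show "x \<in> laurent_eval_monoid \<alpha>" unfolding laurent_eval_monoid_def by blast
  qed
qed

lemma map_poly_real_add: "map_poly real (p + q) = map_poly real p + map_poly real q"
  by (rule poly_eqI) (simp add: coeff_map_poly)

lemma P_eq: "poly_eval_monoid \<alpha> = PS \<alpha>"
proof
  show "poly_eval_monoid \<alpha> \<subseteq> PS \<alpha>"
  proof
    fix x assume "x \<in> poly_eval_monoid \<alpha>"
    then obtain p :: "nat poly" where x: "x = poly (map_poly real p) \<alpha>"
      unfolding poly_eval_monoid_def by blast
    have "\<exists>ks. poly (map_poly real p) \<alpha> = sum_list (map (\<lambda>k. \<alpha> ^ k) ks)"
    proof (induction p rule: pCons_induct)
      case 0 then show ?case by (intro exI[of _ "[]"]) simp
    next
      case (pCons a p)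
      then obtain ks where ks: "poly (map_poly real p) \<alpha> = sum_list (map (\<lambda>k. \<alpha> ^ k) ks)" by blast
      have "poly (map_poly real (pCons a p)) \<alpha> = real a + \<alpha> * poly (map_poly real p) \<alpha>"
        by (simp add: map_poly_pCons)
      also have "\<dots> = sum_list (map (\<lambda>k. \<alpha> ^ k) (replicate a 0 @ map Suc ks))"
        by (simp add: ks sum_list_replicate sum_list_const_mult o_def)
      finally show ?case by blast
    qed
    then show "x \<in> PS \<alpha>" using x unfolding PS_def by auto
  qed
  show "PS \<alpha> \<subseteq> poly_eval_monoid \<alpha>"
  proof
    fix x assume "x \<in> PS \<alpha>"
    then obtain ks where x: "x = sum_list (map (\<lambda>k. \<alpha> ^ k) ks)" unfolding PS_def by blast
    have "\<exists>p :: nat poly. sum_list (map (\<lambda>k. \<alpha> ^ k) ks) = poly (map_poly real p) \<alpha>"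
    proof (induction ks)
      case Nil then show ?case by (intro exI[of _ 0]) simp
    next
      case (Cons k ks)
      then obtain p :: "nat poly" where p: "sum_list (map (\<lambda>k. \<alpha> ^ k) ks) = poly (map_poly real p) \<alpha>" by blast
      show ?case
        by (intro exI[of _ "monom 1 k + p"]) (simp add: p map_poly_real_add map_poly_monom poly_monom)
    qed
    then show "x \<in> poly_eval_monoid \<alpha>" using x unfolding poly_eval_monoid_def by auto
  qed
qed

lemma LS_add: "x \<in> LS a \<Longrightarrow> y \<in> LS a \<Longrightarrow> x + y \<in> LS a"
  unfolding LS_def by clarsimp (metis map_append sum_list_append)

lemma LS_0: "0 \<in> LS a"
  unfolding LS_def by (rule CollectI, rule exI[of _ "[]"]) simp

lemma LS_pow: "a powi k \<in> LS a"
  unfolding LS_def by (rule CollectI, rule exI[of _ "[k]"]) simp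

lemma PS_add: "x \<in> PS a \<Longrightarrow> y \<in> PS a \<Longrightarrow> x + y \<in> PS a"
  unfolding PS_def by clarsimp (metis map_append sum_list_append)

lemma PS_0: "0 \<in> PS a"
  unfolding PS_def by (rule CollectI, rule exI[of _ "[]"]) simp

lemma PS_pow: "a ^ k \<in> PS a"
  unfolding PS_def by (rule CollectI, rule exI[of _ "[k]"]) simp

lemma PS_LS: "PS a \<subseteq> LS a"
proof
  fix x assume "x \<in> PS a"
  then obtain ks where "x = sum_list (map (\<lambda>k. a ^ k) ks)" unfolding PS_def by blast
  then have "x = sum_list (map (\<lambda>k. a powi k) (map int ks))" by (simp add: o_def)
  then show "x \<in> LS a" unfolding LS_def by blast
qed

lemma LS_mult: assumes "a \<noteq> 0" "x \<in> LS a" shows "a powi j * x \<in> LS a"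
proof -
  obtain ks where x: "x = sum_list (map (\<lambda>k. a powi k) ks)" using assms unfolding LS_def by blast
  have "a powi j * x = sum_list (map (\<lambda>k. a powi k) (map ((+) j) ks))"
    unfolding x by (simp add: sum_list_const_mult[symmetric] o_def power_int_add assms)
  then show ?thesis unfolding LS_def by blast
qed

lemma sum_pos: fixes a :: real assumes "a > 0" "ks \<noteq> []" shows "sum_list (map (\<lambda>k. a powi k) ks) > 0"
  using assms(2)
proof (induction ks)
  case (Cons k ks)
  then show ?case using assms(1) by (cases "ks = []") (auto intro: add_pos_pos)
qed simp

lemma sum_nonneg: fixes a :: real assumes "a > 0" shows "sum_list (map (\<lambda>k. a powi k) ks) \<ge> 0"
  using sum_pos[OF assms, of ks] by (cases "ks = []") auto

lemma atom_shift:
  assumes "a > 0" "atom (LS a) x" shows "atom (LS a) (a powi j * x)"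
proof -
  have x: "x \<in> LS a" "x \<noteq> 0" using assms(2) unfolding atom_def by auto
  have inv: "a powi (-j) * (a powi j * y) = y" for y
    using assms(1) by (simp add: mult.assoc[symmetric] power_int_add[symmetric])
  show ?thesis unfolding atom_def
  proof (intro conjI notI)
    show "a powi j * x \<in> LS a" using LS_mult x assms by auto
    show "a powi j * x = 0 \<Longrightarrow> False" using x assms by simp
    assume "\<exists>b c. b \<in> LS a \<and> c \<in> LS a \<and> b \<noteq> 0 \<and> c \<noteq> 0 \<and> a powi j * x = b + c"
    then obtain b c where bc: "b \<in> LS a" "c \<in> LS a" "b \<noteq> 0" "c \<noteq> 0" "a powi j * x = b + c" by blast
    have "x = a powi (-j) * b + a powi (-j) * c"
      using inv[of x] bc(5) by (simp add: distrib_left)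
    moreover have "a powi (-j) * b \<in> LS a" "a powi (-j) * c \<in> LS a"
      using LS_mult bc assms by auto
    moreover have "a powi (-j) * b \<noteq> 0" "a powi (-j) * c \<noteq> 0" using bc assms by auto
    ultimately show False using assms(2) unfolding atom_def by blast
  qed
qed

lemma atom_is_pow:
  assumes "a > 0" "atom (LS a) x" shows "\<exists>k. x = a powi k"
proof -
  obtain ks where x: "x = sum_list (map (\<lambda>k. a powi k) ks)" using assms unfolding atom_def LS_def by blast
  have "ks \<noteq> []" using x assms unfolding atom_def by auto
  then obtain k where k: "k \<in> set ks" by (cases ks) auto
  let ?r = "sum_list (map (\<lambda>k. a powi k) (remove1 k ks))"
  have "x = a powi k + ?r" using x k by (simp add: sum_list_map_remove1)
  moreover have "?r \<in> LS a" unfolding LS_def by blast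
  moreover have "a powi k \<noteq> 0" using assms by simp
  ultimately have "?r = 0" using assms(2) LS_pow unfolding atom_def by blast
  then show ?thesis using \<open>x = a powi k + ?r\<close> by auto
qed

lemma atomic_iff: assumes "a > 0" shows "atomic_monoid (LS a) \<longleftrightarrow> atom (LS a) 1"
proof
  assume A: "atomic_monoid (LS a)"
  have "1 \<in> LS a" using LS_pow[of a 0] by simp
  then obtain xs where xs: "\<forall>y\<in>set xs. atom (LS a) y" "sum_list xs = 1"
    using A unfolding atomic_monoid_def by fastforce
  then obtain y where y: "y \<in> set xs" by (cases xs) auto
  then have "atom (LS a) y" using xs by auto
  then obtain k where "y = a powi k" using atom_is_pow assms by blast
  then have "atom (LS a) (a powi (-k) * (a powi k))" using atom_shift assms \<open>atom (LS a) y\<close> by blast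
  then show "atom (LS a) 1" using assms by (simp add: power_int_add[symmetric])
next
  assume A: "atom (LS a) 1"
  show "atomic_monoid (LS a)" unfolding atomic_monoid_def
  proof (intro ballI impI)
    fix x assume "x \<in> LS a"
    then obtain ks where x: "x = sum_list (map (\<lambda>k. a powi k) ks)" unfolding LS_def by blast
    have "\<forall>y\<in>set (map (\<lambda>k. a powi k) ks). atom (LS a) y"
      using atom_shift[OF assms A] by auto
    then show "\<exists>xs. (\<forall>y\<in>set xs. atom (LS a) y) \<and> sum_list xs = x" using x by blast
  qed
qed

lemma f1: fixes a :: real shows "0 < a \<Longrightarrow> a < 1 \<Longrightarrow> k \<le> 0 \<Longrightarrow> a powi k \<ge> 1"
  by (smt (verit) power_int_0_right power_int_decreasing)
lemma f2: fixes a :: real shows "1 < a \<Longrightarrow> k \<ge> 0 \<Longrightarrow> a powi k \<ge> 1"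
  by simp
lemma f3: fixes a :: real shows "k \<ge> 0 \<Longrightarrow> a powi k = a ^ nat k"
  by (metis power_int_nonneg_exp)
lemma f4: fixes a :: real shows "k \<le> 0 \<Longrightarrow> a powi k = 1 / a ^ nat (-k)"
  by (smt (verit) power_int_minus_divide power_int_nonneg_exp)
lemma f5: fixes a :: real shows "0 < a \<Longrightarrow> a \<noteq> 1 \<Longrightarrow> inj (\<lambda>n::nat. a ^ n)"
  by (metis Groups_Big.power_inject_exp' inj_def)

lemma gen_eq:
  fixes G :: "real set"
  assumes "finite G"
  shows "{\<Sum>g\<in>G. real (n g) * g | n :: real \<Rightarrow> nat. True} = {sum_list xs | xs. set xs \<subseteq> G}"
proof
  show "{\<Sum>g\<in>G. real (n g) * g | n :: real \<Rightarrow> nat. True} \<subseteq> {sum_list xs | xs. set xs \<subseteq> G}"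
  proof
    fix x assume "x \<in> {\<Sum>g\<in>G. real (n g) * g | n :: real \<Rightarrow> nat. True}"
    then obtain n :: "real \<Rightarrow> nat" where x: "x = (\<Sum>g\<in>G. real (n g) * g)" by blast
    have "\<exists>xs. set xs \<subseteq> G \<and> sum_list xs = (\<Sum>g\<in>G. real (n g) * g)"
      using assms
    proof (induction G rule: finite_induct)
      case empty then show ?case by (intro exI[of _ "[]"]) simp
    next
      case (insert a G)
      then obtain xs where "set xs \<subseteq> G" "sum_list xs = (\<Sum>g\<in>G. real (n g) * g)" by blast
      then show ?case using insert
        by (intro exI[of _ "replicate (n a) a @ xs"]) (auto simp: sum_list_replicate)
    qed
    then obtain xs where "set xs \<subseteq> G" "sum_list xs = x" using x by auto
    then show "x \<in> {sum_list xs | xs. set xs \<subseteq> G}" by blast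
  qed
  show "{sum_list xs | xs. set xs \<subseteq> G} \<subseteq> {\<Sum>g\<in>G. real (n g) * g | n :: real \<Rightarrow> nat. True}"
  proof
    fix x assume "x \<in> {sum_list xs | xs. set xs \<subseteq> G}"
    then obtain xs where xs: "set xs \<subseteq> G" "x = sum_list xs" by blast
    have "x = (\<Sum>g\<in>G. real (count_list xs g) * g)"
      using sum_list_count_real2[OF xs(1) assms, of "\<lambda>x. x"] xs(2) by simp
    then show "x \<in> {\<Sum>g\<in>G. real (n g) * g | n :: real \<Rightarrow> nat. True}" by blast
  qed
qed

lemma atom_in_list:
  fixes M :: "real set"
  assumes "atom M x" "0 \<in> M" "\<And>a b. a \<in> M \<Longrightarrow> b \<in> M \<Longrightarrow> a + b \<in> M"
    "set xs \<subseteq> M" "sum_list xs = x"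
  shows "x \<in> set xs"
  using assms(4,5)
proof (induction xs)
  case Nil then show ?case using assms(1) unfolding atom_def by auto
next
  case (Cons y ys)
  have ys: "sum_list ys \<in> M"
    using Cons.prems(1) by (induction ys) (auto intro: assms(2,3))
  show ?case
  proof (cases "y = 0")
    case True
    then have "sum_list ys = x" using Cons.prems by simp
    then show ?thesis using Cons by auto
  next
    case False
    show ?thesis
    proof (cases "sum_list ys = 0")
      case True then show ?thesis using Cons.prems by simp
    next
      case F2: False
      have "y \<in> M" using Cons.prems by auto
      then have False using assms(1) ys False F2 Cons.prems(2) unfolding atom_def by auto
      then show ?thesis ..
    qed
  qed
qed

lemma list_comb:
  assumes "\<forall>m\<in>set ms. \<exists>xs. set xs \<subseteq> G \<and> sum_list xs = (f m :: real)"
  shows "\<exists>xs. set xs \<subseteq> G \<and> sum_list xs = sum_list (map f ms)"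
  using assms
proof (induction ms)
  case Nil then show ?case by (intro exI[of _ "[]"]) simp
next
  case (Cons m ms)
  then obtain xs ys where "set xs \<subseteq> G" "sum_list xs = f m" "set ys \<subseteq> G" "sum_list ys = sum_list (map f ms)"
    by auto
  then show ?case by (intro exI[of _ "xs @ ys"]) auto
qed

theorem proposition3p4:
  fixes \<alpha> :: real
  assumes "\<alpha> > 0" and "\<alpha> \<noteq> 1"
  shows "\<not> atomic_monoid (laurent_eval_monoid \<alpha>) \<longleftrightarrow>
           (antimatter (poly_eval_monoid \<alpha>) \<or> fin_generated (poly_eval_monoid \<alpha>))"
proof -
  note a0 = assms(1)
  have one_LS: "1 \<in> LS \<alpha>" using LS_pow[of \<alpha> 0] by simp
  have one_PS: "1 \<in> PS \<alpha>" using PS_pow[of \<alpha> 0] by simp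
  have "\<not> atom (LS \<alpha>) 1 \<longleftrightarrow> (antimatter (PS \<alpha>) \<or> fin_generated (PS \<alpha>))"
  proof
    assume na: "\<not> atom (LS \<alpha>) 1"
    then obtain b c where bc: "b \<in> LS \<alpha>" "c \<in> LS \<alpha>" "b \<noteq> 0" "c \<noteq> 0" "1 = b + c"
      using one_LS unfolding atom_def by auto
    obtain ks1 where ks1: "b = sum_list (map (\<lambda>k. \<alpha> powi k) ks1)" using bc unfolding LS_def by blast
    obtain ks2 where ks2: "c = sum_list (map (\<lambda>k. \<alpha> powi k) ks2)" using bc unfolding LS_def by blast
    have ne: "ks1 \<noteq> []" "ks2 \<noteq> []" using bc ks1 ks2 by auto
    define ks where "ks = ks1 @ ks2"
    have one: "1 = sum_list (map (\<lambda>k. \<alpha> powi k) ks)" using bc ks1 ks2 ks_def by simp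
    have len: "length ks \<ge> 2" using ne unfolding ks_def by (cases ks1; cases ks2) auto
    have lt1: "\<alpha> powi k < 1" if k: "k \<in> set ks" for k
    proof -
      have "1 = \<alpha> powi k + sum_list (map (\<lambda>k. \<alpha> powi k) (remove1 k ks))"
        using one k by (simp add: sum_list_map_remove1)
      moreover have "remove1 k ks \<noteq> []" using len k length_remove1[of k ks] by (cases "remove1 k ks") auto
      ultimately show ?thesis using sum_pos[OF a0] by fastforce
    qed
    show "antimatter (PS \<alpha>) \<or> fin_generated (PS \<alpha>)"
    proof (cases "\<alpha> < 1")
      case True
      have kpos: "k > 0" if "k \<in> set ks" for k
        using lt1[OF that] f1[OF a0 True, of k] by linarith
      define ms where "ms = map nat ks"
      have one': "1 = sum_list (map (\<lambda>m. \<alpha> ^ m) ms)"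
        unfolding one ms_def by (simp add: o_def, rule arg_cong[where f=sum_list], rule map_cong, simp_all add: f3 kpos less_imp_le)
      have "length ms \<ge> 2" using len ms_def by simp
      then obtain m1 m2 rest where ms: "ms = m1 # m2 # rest"
        by (auto simp: numeral_2_eq_2 Suc_le_length_iff)
      show ?thesis
      proof (rule disjI1, unfold antimatter_def, rule notI, elim exE)
        fix x assume ax: "atom (PS \<alpha>) x"
        then obtain js where x: "x = sum_list (map (\<lambda>k. \<alpha> ^ k) js)" unfolding atom_def PS_def by blast
        have "js \<noteq> []" using x ax unfolding atom_def by auto
        then obtain j where j: "j \<in> set js" by (cases js) auto
        define r where "r = sum_list (map (\<lambda>k. \<alpha> ^ k) (remove1 j js))"
        have xr: "x = \<alpha> ^ j + r" unfolding r_def x using j by (simp add: sum_list_map_remove1)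
        have rP: "r \<in> PS \<alpha>" unfolding r_def PS_def by blast
        have r0: "r \<ge> 0" unfolding r_def using a0 by (intro sum_list_nonneg) auto
        define s where "s = sum_list (map (\<lambda>m. \<alpha> ^ (j + m)) (m2 # rest))"
        have sP: "s \<in> PS \<alpha>" unfolding s_def PS_def
          by (rule CollectI, rule exI[of _ "map ((+) j) (m2 # rest)"]) (simp add: o_def)
        have s0: "s > 0" unfolding s_def using a0
          by (simp, intro add_pos_nonneg sum_list_nonneg) auto
        have "\<alpha> ^ j = \<alpha> ^ j * 1" by simp
        also have "\<dots> = \<alpha> ^ (j + m1) + s"
          unfolding one' ms s_def by (simp add: distrib_left sum_list_const_mult[symmetric] power_add o_def)
        finally have dec: "\<alpha> ^ j = \<alpha> ^ (j + m1) + s" .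
        have pj: "\<alpha> ^ j \<in> PS \<alpha>" "\<alpha> ^ (j + m1) \<in> PS \<alpha>" using PS_pow by auto
        show False
        proof (cases "r = 0")
          case True
          then have "x = \<alpha> ^ (j + m1) + s" using xr dec by simp
          moreover have "\<alpha> ^ (j + m1) \<noteq> 0" "s \<noteq> 0" using a0 s0 by auto
          ultimately show False using ax pj sP unfolding atom_def by blast
        next
          case False
          moreover have "\<alpha> ^ j \<noteq> 0" using a0 by auto
          ultimately show False using ax pj rP xr unfolding atom_def by blast
        qed
      qed
    next
      case False
      then have a1: "\<alpha> > 1" using assms by linarith
      have kneg: "k < 0" if "k \<in> set ks" for k
        using lt1[OF that] f2[OF a1, of k] by linarith
      define ms where "ms = map (\<lambda>k. nat (-k)) ks"
      have one': "1 = sum_list (map (\<lambda>m. 1 / \<alpha> ^ m) ms)"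
      proof -
        have "map (\<lambda>m. 1 / \<alpha> ^ m) ms = map (\<lambda>k. \<alpha> powi k) ks"
          unfolding ms_def by (auto simp: f4 kneg less_imp_le)
        then show ?thesis using one by simp
      qed
      have mpos: "m \<ge> 1" if "m \<in> set ms" for m using that kneg unfolding ms_def by force
      define N where "N = sum_list ms"
      have mN: "m \<le> N" if "m \<in> set ms" for m unfolding N_def using that by (intro member_le_sum_list) auto
      have aN: "\<alpha> ^ N = sum_list (map (\<lambda>m. \<alpha> ^ (N - m)) ms)"
      proof -
        have "\<alpha> ^ N = \<alpha> ^ N * 1" by simp
        also have "\<dots> = \<alpha> ^ N * sum_list (map (\<lambda>m. 1 / \<alpha> ^ m) ms)"
          using one' by simp
        also have "\<dots> = sum_list (map (\<lambda>m. \<alpha> ^ N * (1 / \<alpha> ^ m)) ms)"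
          by (rule sum_list_const_mult[symmetric])
        also have "\<dots> = sum_list (map (\<lambda>m. \<alpha> ^ (N - m)) ms)"
        proof (rule arg_cong[where f=sum_list], rule map_cong[OF refl])
          fix m assume "m \<in> set ms"
          then show "\<alpha> ^ N * (1 / \<alpha> ^ m) = \<alpha> ^ (N - m)"
            using power_diff[of \<alpha> m N] mN[of m] a0 by simp
        qed
        finally show ?thesis .
      qed
      define G where "G = (\<lambda>i. \<alpha> ^ i) ` {..<N}"
      have finG: "finite G" unfolding G_def by simp
      have GP: "G \<subseteq> PS \<alpha>" unfolding G_def using PS_pow by auto
      have pw: "\<exists>xs. set xs \<subseteq> G \<and> sum_list xs = \<alpha> ^ j" for j
      proof (induction j rule: less_induct)
        case (less j)
        show ?case
        proof (cases "j < N")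
          case True
          then show ?thesis unfolding G_def by (intro exI[of _ "[\<alpha> ^ j]"]) auto
        next
          case False
          have "\<alpha> ^ j = \<alpha> ^ (j - N) * \<alpha> ^ N" using False by (simp add: power_add[symmetric])
          also have "\<dots> = sum_list (map (\<lambda>m. \<alpha> ^ (j - N) * \<alpha> ^ (N - m)) ms)"
            by (subst aN) (simp add: sum_list_const_mult)
          also have "\<dots> = sum_list (map (\<lambda>m. \<alpha> ^ (j - m)) ms)"
          proof (rule arg_cong[where f=sum_list], rule map_cong)
            fix m assume "m \<in> set ms"
            then have "j - N + (N - m) = j - m" using mN[of m] False by arith
            then show "\<alpha> ^ (j - N) * \<alpha> ^ (N - m) = \<alpha> ^ (j - m)" by (simp add: power_add[symmetric])
          qed simp
          finally have eq: "\<alpha> ^ j = sum_list (map (\<lambda>m. \<alpha> ^ (j - m)) ms)" .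
          have "\<forall>m\<in>set ms. \<exists>xs. set xs \<subseteq> G \<and> sum_list xs = \<alpha> ^ (j - m)"
          proof
            fix m assume "m \<in> set ms"
            then have "j - m < j" using mpos mN False by fastforce
            then show "\<exists>xs. set xs \<subseteq> G \<and> sum_list xs = \<alpha> ^ (j - m)" by (rule less.IH)
          qed
          from list_comb[OF this] show ?thesis using eq by simp
        qed
      qed
      have "PS \<alpha> = {sum_list xs | xs. set xs \<subseteq> G}"
      proof
        show "PS \<alpha> \<subseteq> {sum_list xs | xs. set xs \<subseteq> G}"
        proof
          fix x assume "x \<in> PS \<alpha>"
          then obtain js where x: "x = sum_list (map (\<lambda>k. \<alpha> ^ k) js)" unfolding PS_def by blast
          have "\<exists>xs. set xs \<subseteq> G \<and> sum_list xs = sum_list (map (\<lambda>k. \<alpha> ^ k) js)"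
            using pw by (intro list_comb) auto
          then obtain xs where "set xs \<subseteq> G" "sum_list xs = x" using x by auto
          then show "x \<in> {sum_list xs | xs. set xs \<subseteq> G}" by blast
        qed
        show "{sum_list xs | xs. set xs \<subseteq> G} \<subseteq> PS \<alpha>"
        proof
          fix x assume "x \<in> {sum_list xs | xs. set xs \<subseteq> G}"
          then obtain xs where xs: "set xs \<subseteq> G" "x = sum_list xs" by blast
          have "sum_list xs \<in> PS \<alpha>" using xs(1)
            by (induction xs) (use GP in \<open>auto intro: PS_add PS_0\<close>)
          then show "x \<in> PS \<alpha>" using xs by simp
        qed
      qed
      then have "fin_generated (PS \<alpha>)" unfolding fin_generated_def
        using finG GP gen_eq[OF finG] by (intro exI[of _ G]) simp
      then show ?thesis ..
    qed
  next
    assume "antimatter (PS \<alpha>) \<or> fin_generated (PS \<alpha>)"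
    then show "\<not> atom (LS \<alpha>) 1"
    proof
      assume "antimatter (PS \<alpha>)"
      then have "\<not> atom (PS \<alpha>) 1" unfolding antimatter_def by blast
      then obtain b c where "b \<in> PS \<alpha>" "c \<in> PS \<alpha>" "b \<noteq> 0" "c \<noteq> 0" "1 = b + c"
        using one_PS unfolding atom_def by auto
      then show ?thesis using PS_LS unfolding atom_def by blast
    next
      assume "fin_generated (PS \<alpha>)"
      then obtain G where G: "finite G" "G \<subseteq> PS \<alpha>" "PS \<alpha> = {\<Sum>g\<in>G. real (n g) * g | n :: real \<Rightarrow> nat. True}"
        unfolding fin_generated_def by blast
      have PG: "PS \<alpha> = {sum_list xs | xs. set xs \<subseteq> G}" using G gen_eq by simp
      have GL: "G \<subseteq> LS \<alpha>" using G(2) PS_LS by blast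
      show ?thesis
      proof
        assume A: "atom (LS \<alpha>) 1"
        have "\<alpha> ^ n \<in> G" for n
        proof -
          have "\<alpha> ^ n \<in> PS \<alpha>" by (rule PS_pow)
          then obtain xs where xs: "set xs \<subseteq> G" "sum_list xs = \<alpha> ^ n" using PG by auto
          have "atom (LS \<alpha>) (\<alpha> powi (int n) * 1)" by (rule atom_shift[OF a0 A])
          then have "atom (LS \<alpha>) (\<alpha> ^ n)" by simp
          then have "\<alpha> ^ n \<in> set xs"
            by (rule atom_in_list) (use xs GL in \<open>auto intro: LS_0 LS_add\<close>)
          then show ?thesis using xs by auto
        qed
        then have "range (\<lambda>n::nat. \<alpha> ^ n) \<subseteq> G" by auto
        then have "finite (range (\<lambda>n::nat. \<alpha> ^ n))" using G(1) finite_subset by blast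
        then show False using f5[OF assms] finite_imageD by blast
      qed
    qed
  qed
  moreover have "\<not> atomic_monoid (LS \<alpha>) \<longleftrightarrow> \<not> atom (LS \<alpha>) 1" using atomic_iff[OF a0] by simp
  ultimately show ?thesis unfolding L_eq P_eq by simp
qed

end
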